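(* Let $m,d\in\mathbb N$ and consider the two-layer model $f_\theta(x)=\sum_{i=1}^m a_i\tanh(w_i^\top x)$, $x\in\mathbb R^d$, $\theta=(a_i,w_i)_{i=1}^m\in\mathbb R^{m(d+1)}$. For every integer $0\leq k\leq m$ and every $f^*\in\mathcal F^{\mathrm{NN}}_k\setminus\mathcal F^{\mathrm{NN}}_{k-1}$, the optimistic sample size is $O_{f_\theta}(f^* )=k(d+1)$.
   Context: For $k\geq1$, $\mathcal F^{\mathrm{NN}}_k=\{x\mapsto\sum_{i=1}^k a_i\tanh(w_i^\top x): a_i\in\mathbb R,\ w_i\in\mathbb R^d\}$; $\mathcal F^{\mathrm{NN}}_0=\{0\}$ (the zero function) and $\mathcal F^{\mathrm{NN}}_{-1}=\emptyset$. The loss $\ell:\mathbb R\times\mathbb R\to[0,\infty)$ is continuously differentiable with $\ell(u,v)=0$ iff $u=v$. For $f^*$ in the function space of $f_\theta$: $\mathcal M_{f^*}=\{\theta:f_\theta=f^*\}$; a dataset of size $n$ from $f^*$ is $\{(x_i,f^*(x_i))\}_{i=1}^n$ with empirical loss $\frac1n\sum_i\ell(u(x_i),f^*(x_i))$ for a function $u$ (identically $0$ if $n=0$); the tangent hyperplane at $\theta'$ is $\{f(\cdot;\theta')+a^\top\nabla_\theta f(\cdot;\theta'):a\in\mathbb R^{m(d+1)}\}$; $f^*$ has $n$-sample LLR-guarantee if for some dataset of size $n$ from $f^*$ and some $\theta'\in\mathcal M_{f^*}$ the set of minimizers of the empirical loss over the tangent hyperplane at $\theta'$ is exactly $\{f^*\}$;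 the optimistic sample size $O_{f_\theta}(f^* )$ is the smallest such $n\geq0$. *)

theory Defs
  imports "HOL-Analysis.Analysis"
begin

text \<open>Two-layer tanh network with m = CARD('m) neurons on inputs x in R^d, d = CARD('d).
  A parameter theta = (a_i, w_i)_{i} is an element of (real \<times> (real^'d))^'m, i.e. of R^{m(d+1)}.\<close>
definition nn_model :: "(real \<times> (real^'d))^'m::finite \<Rightarrow> real^'d \<Rightarrow> real" where
  "nn_model \<theta> x = (\<Sum>i\<in>UNIV. fst (\<theta> $ i) * tanh (snd (\<theta> $ i) \<bullet> x))"

definition NN_class :: "int \<Rightarrow> (real^'d \<Rightarrow> real) set" where
  "NN_class k = (if k < 0 then {} else if k = 0 then {\<lambda>x. 0}
     else {f. \<exists>(a::nat \<Rightarrow> real) (w::nat \<Rightarrow> real^'d).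
               f = (\<lambda>x. \<Sum>i<nat k. a i * tanh (w i \<bullet> x))})"

definition admissible_loss :: "(real \<times> real \<Rightarrow> real) \<Rightarrow> bool" where
  "admissible_loss loss \<longleftrightarrow> (\<forall>z. loss z \<ge> 0) \<and> (\<forall>u v. loss (u, v) = 0 \<longleftrightarrow> u = v) \<and>
     (\<exists>D :: real \<times> real \<Rightarrow> (real \<times> real) \<Rightarrow>\<^sub>L real.
        (\<forall>z. (loss has_derivative blinfun_apply (D z)) (at z)) \<and> continuous_on UNIV D)"

definition target_set :: "(real^'d \<Rightarrow> real) \<Rightarrow> ((real \<times> (real^'d))^'m::finite) set" where
  "target_set fs = {\<theta>. nn_model \<theta> = fs}"

text \<open>Empirical loss of u on the dataset {(x_i, f*(x_i))}, xs the list of inputs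
  (identically 0 if the dataset is empty; note real division by 0 is 0).\<close>
definition emp_loss :: "(real \<times> real \<Rightarrow> real) \<Rightarrow> (real^'d \<Rightarrow> real) \<Rightarrow> (real^'d) list
    \<Rightarrow> (real^'d \<Rightarrow> real) \<Rightarrow> real" where
  "emp_loss loss fs xs u = (if xs = [] then 0
     else (\<Sum>i<length xs. loss (u (xs ! i), fs (xs ! i))) / real (length xs))"

text \<open>Tangent hyperplane at theta': f(.;theta') + a^T grad_theta f(.;theta'),
  where a^T grad_theta f(x;theta') is the Frechet derivative of theta \<mapsto> f(x;theta) at theta'
  applied to the direction a.\<close>
definition tangent_hyperplane :: "(real \<times> (real^'d))^'m::finite \<Rightarrow> (real^'d \<Rightarrow> real) set" where
  "tangent_hyperplane \<theta>' = {u. \<exists>a :: (real \<times> (real^'d))^'m.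
      u = (\<lambda>x. nn_model \<theta>' x + frechet_derivative (\<lambda>\<theta>. nn_model \<theta> x) (at \<theta>') a)}"

definition minimizers_on :: "('f \<Rightarrow> real) \<Rightarrow> 'f set \<Rightarrow> 'f set" where
  "minimizers_on L S = {u \<in> S. \<forall>v\<in>S. L u \<le> L v}"

definition LLR_guarantee ::
    "'m::finite itself \<Rightarrow> (real \<times> real \<Rightarrow> real) \<Rightarrow> (real^'d \<Rightarrow> real) \<Rightarrow> nat \<Rightarrow> bool" where
  "LLR_guarantee _ loss fs n \<longleftrightarrow> (\<exists>xs (\<theta>' :: (real \<times> (real^'d))^'m). length xs = n \<and>
      \<theta>' \<in> target_set fs \<and>
      minimizers_on (emp_loss loss fs xs) (tangent_hyperplane \<theta>') = {fs})"

definition optimistic_sample_size ::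
    "'m::finite itself \<Rightarrow> (real \<times> real \<Rightarrow> real) \<Rightarrow> (real^'d \<Rightarrow> real) \<Rightarrow> nat" where
  "optimistic_sample_size M loss fs = (LEAST n. LLR_guarantee M loss fs n)"

end

theory Submission
  imports Defs "HOL-Real_Asymp.Real_Asymp"
begin
lemma lim_const0: "((\<lambda>t::real. 0::real) \<longlongrightarrow> L) at_top \<Longrightarrow> L = 0"
  by (metis tendsto_const tendsto_unique trivial_limit_at_top_linorder)

lemma indep_1d:
  fixes G :: "'a set" and lam alpha gam :: "'a \<Rightarrow> real"
  assumes "finite G" "inj_on lam G" "\<forall>g\<in>G. lam g > 0"
   "\<forall>t. (\<Sum>g\<in>G. alpha g * tanh (lam g * t) + gam g * (t * (1 - tanh (lam g * t)^2))) = 0"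
  shows "\<forall>g\<in>G. alpha g = 0 \<and> gam g = 0"
  using assms
proof (induction G rule: finite_psubset_induct)
  case (psubset G)
  show ?case
  proof (cases "G = {}")
    case True then show ?thesis by simp
  next
    case False
    obtain g0 where g0: "g0 \<in> G" "lam g0 = Min (lam ` G)"
    proof -
      have "Min (lam ` G) \<in> lam ` G" using Min_in[of "lam ` G"] psubset.hyps False by auto
      then show ?thesis using that by auto
    qed
    define mu where "mu = lam g0"
    have mupos: "mu > 0" using g0 psubset.prems mu_def by auto
    have gt: "lam g > mu" if "g \<in> G" "g \<noteq> g0" for g
    proof -
      have "mu \<le> lam g" using g0 that psubset.hyps mu_def by simp
      moreover have "lam g \<noteq> mu" using psubset.prems(1) that g0 mu_def
        by (metis inj_on_eq_iff)
      ultimately show ?thesis by simp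
    qed
    define F where "F = (\<lambda>t. \<Sum>g\<in>G. alpha g * tanh (lam g * t) + gam g * (t * (1 - tanh (lam g * t)^2)))"
    have F0: "F t = 0" for t using psubset.prems F_def by simp
    have "(F \<longlongrightarrow> (\<Sum>g\<in>G. alpha g * 1 + gam g * 0)) at_top"
      unfolding F_def
    proof (intro tendsto_sum tendsto_add tendsto_mult_left)
      fix g assume "g \<in> G"
      then have l: "lam g > 0" using psubset.prems by auto
      show "((\<lambda>t. tanh (lam g * t)) \<longlongrightarrow> 1) at_top" using l by real_asymp
      show "((\<lambda>t. t * (1 - tanh (lam g * t)^2)) \<longlongrightarrow> 0) at_top" using l by real_asymp
    qed
    moreover have "F = (\<lambda>t. 0)" using F0 by auto
    ultimately have sa: "(\<Sum>g\<in>G. alpha g) = 0" using lim_const0 by simp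
    have Fe: "F t = (\<Sum>g\<in>G. alpha g * (tanh (lam g * t) - 1) + gam g * (t * (1 - tanh (lam g * t)^2)))" for t
      unfolding F_def using sa by (simp add: algebra_simps sum.distrib sum_subtractf)
    have "((\<lambda>t. \<Sum>g\<in>G. alpha g * ((tanh (lam g * t) - 1) * exp (2 * mu * t) / t)
           + gam g * (t * (1 - tanh (lam g * t)^2) * exp (2 * mu * t) / t)) \<longlongrightarrow>
       (\<Sum>g\<in>G. alpha g * 0 + gam g * (if g = g0 then 4 else 0))) at_top"
    proof (intro tendsto_sum tendsto_add tendsto_mult_left)
      fix g assume g: "g \<in> G"
      then have l: "lam g > 0" using psubset.prems by auto
      show "((\<lambda>t. (tanh (lam g * t) - 1) * exp (2 * mu * t) / t) \<longlongrightarrow> 0) at_top"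
      proof (cases "g = g0")
        case True then show ?thesis using mupos mu_def by real_asymp
      next
        case False then have "lam g > mu" using gt g by simp
        then show ?thesis using mupos by real_asymp
      qed
      show "((\<lambda>t. t * (1 - (tanh (lam g * t))\<^sup>2) * exp (2 * mu * t) / t) \<longlongrightarrow> (if g = g0 then 4 else 0)) at_top"
      proof (cases "g = g0")
        case True then show ?thesis using mupos unfolding True mu_def[symmetric] by real_asymp
      next
        case False then have "lam g > mu" using gt g by simp
        then show ?thesis using mupos False by (simp only: if_False) real_asymp
      qed
    qed
    moreover have "(\<lambda>t. \<Sum>g\<in>G. alpha g * ((tanh (lam g * t) - 1) * exp (2 * mu * t) / t)
           + gam g * (t * (1 - tanh (lam g * t)^2) * exp (2 * mu * t) / t)) = (\<lambda>t. F t * exp (2 * mu * t) / t)"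
      unfolding Fe sum_distrib_right sum_divide_distrib
      by (intro ext sum.cong refl) (simp add: algebra_simps diff_divide_distrib add_divide_distrib)
    ultimately have "(\<Sum>g\<in>G. gam g * (if g = g0 then 4 else 0)) = 0" using F0 lim_const0 by simp
    then have gam0: "gam g0 = 0" using g0 psubset.hyps by (simp add: if_distrib sum.delta cong: if_cong)
    have "((\<lambda>t. \<Sum>g\<in>G. alpha g * ((tanh (lam g * t) - 1) * exp (2 * mu * t))
           + gam g * (t * (1 - tanh (lam g * t)^2) * exp (2 * mu * t))) \<longlongrightarrow>
       (\<Sum>g\<in>G. alpha g * (if g = g0 then -2 else 0) + gam g * 0)) at_top"
    proof (intro tendsto_sum tendsto_add)
      fix g assume g: "g \<in> G"
      then have l: "lam g > 0" using psubset.prems by auto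
      have "((\<lambda>t. (tanh (lam g * t) - 1) * exp (2 * mu * t)) \<longlongrightarrow> (if g = g0 then -2 else 0)) at_top"
      proof (cases "g = g0")
        case True then show ?thesis using mupos unfolding True mu_def[symmetric] by simp real_asymp
      next
        case False then have "lam g > mu" using gt g by simp
        then show ?thesis using mupos False by simp real_asymp
      qed
      then show "((\<lambda>t. alpha g * ((tanh (lam g * t) - 1) * exp (2 * mu * t))) \<longlongrightarrow> alpha g * (if g = g0 then -2 else 0)) at_top"
        by (rule tendsto_mult_left)
      show "((\<lambda>t. gam g * (t * (1 - (tanh (lam g * t))\<^sup>2) * exp (2 * mu * t))) \<longlongrightarrow> gam g * 0) at_top"
      proof (cases "g = g0")
        case True then show ?thesis using gam0 by simp
      next
        case False then have "lam g > mu" using gt g by simp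
        then have "((\<lambda>t. t * (1 - (tanh (lam g * t))\<^sup>2) * exp (2 * mu * t)) \<longlongrightarrow> 0) at_top"
          using mupos by real_asymp
        then show ?thesis by (intro tendsto_mult_left)
      qed
    qed
    moreover have "(\<lambda>t. \<Sum>g\<in>G. alpha g * ((tanh (lam g * t) - 1) * exp (2 * mu * t))
           + gam g * (t * (1 - tanh (lam g * t)^2) * exp (2 * mu * t))) = (\<lambda>t. F t * exp (2 * mu * t))"
      unfolding Fe sum_distrib_right
      by (intro ext sum.cong refl) (simp add: algebra_simps)
    ultimately have "(\<Sum>g\<in>G. alpha g * (if g = g0 then -2 else 0)) = 0" using F0 lim_const0 by simp
    then have al0: "alpha g0 = 0" using g0 psubset.hyps by (simp add: if_distrib sum.delta cong: if_cong)
    have sub: "G - {g0} \<subset> G" using g0 by auto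
    have "\<forall>t. (\<Sum>g\<in>G - {g0}. alpha g * tanh (lam g * t) + gam g * (t * (1 - tanh (lam g * t)^2))) = 0"
    proof
      fix t
      have "F t = (\<Sum>g\<in>G - {g0}. alpha g * tanh (lam g * t) + gam g * (t * (1 - tanh (lam g * t)^2)))"
        unfolding F_def using g0 psubset.hyps al0 gam0 by (simp add: sum.remove)
      then show "(\<Sum>g\<in>G - {g0}. alpha g * tanh (lam g * t) + gam g * (t * (1 - tanh (lam g * t)^2))) = 0"
        using F0 by simp
    qed
    then have "\<forall>g\<in>G - {g0}. alpha g = 0 \<and> gam g = 0"
      using psubset.IH[OF sub] psubset.prems by (auto intro: inj_on_subset)
    then show ?thesis using al0 gam0 by auto
  qed
qed
definition dnn :: "(real \<times> (real^'d))^'m::finite \<Rightarrow> real^'d \<Rightarrow> (real \<times> (real^'d))^'m \<Rightarrow> real" where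
  "dnn th x a = (\<Sum>i\<in>UNIV. fst (a$i) * tanh (snd (th$i) \<bullet> x)
      + fst (th$i) * ((snd (a$i) \<bullet> x) * (1 - tanh (snd (th$i) \<bullet> x)^2)))"

lemma nn_has_derivative:
  fixes th' :: "(real \<times> (real^'d))^'m::finite" and x :: "real^'d"
  shows "((\<lambda>th. nn_model th x) has_derivative dnn th' x) (at th')"
proof -
  have bl: "bounded_linear (\<lambda>a::(real \<times> (real^'d))^'m. a $ i)" for i by (rule bounded_linear_vec_nth)
  have d1: "((\<lambda>th::(real \<times> (real^'d))^'m. fst (th $ i)) has_derivative (\<lambda>a. fst (a $ i))) (at th')" for i
    using bounded_linear_compose[OF bounded_linear_fst bl[of i]]
    by (simp add: bounded_linear_imp_has_derivative o_def)
  have d2: "((\<lambda>th::(real \<times> (real^'d))^'m. snd (th $ i) \<bullet> x) has_derivative (\<lambda>a. snd (a $ i) \<bullet> x)) (at th')" for i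
    using bounded_linear_compose[OF bounded_linear_inner_left bounded_linear_compose[OF bounded_linear_snd bl[of i]]]
    by (simp add: bounded_linear_imp_has_derivative o_def)
  have d3: "((\<lambda>th::(real \<times> (real^'d))^'m. tanh (snd (th $ i) \<bullet> x)) has_derivative
      (\<lambda>a. (snd (a $ i) \<bullet> x) * (1 - tanh (snd (th' $ i) \<bullet> x)^2))) (at th')" for i
  proof -
    have "(tanh has_derivative (\<lambda>h. h * (1 - tanh (snd (th' $ i) \<bullet> x)^2))) (at (snd (th' $ i) \<bullet> x))"
    proof -
      have "(tanh has_field_derivative (1 - tanh (snd (th' $ i) \<bullet> x)^2)) (at (snd (th' $ i) \<bullet> x))"
        using has_field_derivative_tanh[OF _ DERIV_ident, of "snd (th' $ i) \<bullet> x" UNIV]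
        by (simp add: cosh_real_pos[THEN less_imp_neq, symmetric])
      then show ?thesis unfolding has_field_derivative_def by (simp add: mult.commute[of _ "1 - _"])
    qed
    from has_derivative_compose[OF d2[of i] this] show ?thesis by (simp add: o_def)
  qed
  show ?thesis unfolding nn_model_def[abs_def] dnn_def
    by (rule has_derivative_sum, rule has_derivative_eq_rhs[OF has_derivative_mult[OF d1 d3]])
       (auto simp: algebra_simps)
qed

lemma frechet_nn: "frechet_derivative (\<lambda>th. nn_model th x) (at th') = dnn th' x"
  using frechet_derivative_at[OF nn_has_derivative] by metis


lemma line_finite:
  fixes N :: "'a::real_inner set"
  assumes "finite N" "\<forall>n\<in>N. inner n z0 \<noteq> 0 \<or> inner n y \<noteq> 0"
  shows "finite {s::real. \<exists>n\<in>N. inner n (z0 + s *\<^sub>R y) = 0}"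
proof -
  have "{s::real. \<exists>n\<in>N. inner n (z0 + s *\<^sub>R y) = 0} \<subseteq> (\<lambda>n. - inner n z0 / inner n y) ` N"
  proof
    fix s assume "s \<in> {s::real. \<exists>n\<in>N. inner n (z0 + s *\<^sub>R y) = 0}"
    then obtain n where n: "n \<in> N" "inner n z0 + s * inner n y = 0"
      by (auto simp: inner_add_right)
    then have "inner n y \<noteq> 0" using assms(2) by auto
    then have "s = - inner n z0 / inner n y" using n(2) by (simp add: field_simps)
    then show "s \<in> (\<lambda>n. - inner n z0 / inner n y) ` N" using n(1) by auto
  qed
  then show ?thesis using assms(1) finite_subset by blast
qed

lemma avoid_hyperplanes:
  fixes N :: "'a::real_inner set"
  assumes "finite N" "0 \<notin> N"
  shows "\<exists>z. \<forall>n\<in>N. inner n z \<noteq> 0"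
  using assms
proof (induction N rule: finite_induct)
  case empty then show ?case by simp
next
  case (insert n N)
  then obtain z0 where z0: "\<forall>n\<in>N. inner n z0 \<noteq> 0" by auto
  have nn: "inner n n \<noteq> 0" using insert.prems by simp
  have "finite {s::real. \<exists>n'\<in>insert n N. inner n' (z0 + s *\<^sub>R n) = 0}"
    using z0 nn insert.hyps(1) by (intro line_finite) auto
  then obtain s where "s \<notin> {s::real. \<exists>n'\<in>insert n N. inner n' (z0 + s *\<^sub>R n) = 0}"
    using ex_new_if_finite[OF infinite_UNIV_char_0] by blast
  then show ?case by blast
qed

lemma tanh_abs_mult: "tanh (c * t) = sgn c * tanh (\<bar>c\<bar> * t)" for c t :: real
  by (cases "c \<ge> 0") (auto simp: sgn_if)

lemma tanh_sq_abs_mult: "tanh (c * t)^2 = tanh (\<bar>c\<bar> * t)^2" for c t :: real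
  by (cases "c \<ge> 0") auto

lemma tanh_abs_mult': "tanh (t * c) = sgn c * tanh (\<bar>c\<bar> * t)" for c t :: real
  using tanh_abs_mult[of c t] by (simp only: mult.commute[of t c])

lemma tanh_sq_abs_mult': "tanh (t * c)^2 = tanh (\<bar>c\<bar> * t)^2" for c t :: real
  using tanh_sq_abs_mult[of c t] by (simp only: mult.commute[of t c])

lemma indep_multi:
  fixes w be :: "'i \<Rightarrow> real^'d" and al :: "'i \<Rightarrow> real"
  assumes fin: "finite J" and nz: "\<forall>j\<in>J. w j \<noteq> 0"
    and np: "\<forall>i\<in>J. \<forall>j\<in>J. i \<noteq> j \<longrightarrow> w i \<noteq> w j \<and> w i \<noteq> - w j"
    and eq: "\<forall>x. (\<Sum>j\<in>J. al j * tanh (w j \<bullet> x) + (be j \<bullet> x) * (1 - tanh (w j \<bullet> x)^2)) = 0"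
  shows "\<forall>j\<in>J. al j = 0 \<and> be j = 0"
proof -
  define N where "N = w ` J \<union> (\<lambda>(i,j). w i - w j) ` {(i,j). i \<in> J \<and> j \<in> J \<and> i \<noteq> j}
      \<union> (\<lambda>(i,j). w i + w j) ` {(i,j). i \<in> J \<and> j \<in> J \<and> i \<noteq> j}"
  have finN: "finite N" unfolding N_def using fin
    by (intro finite_UnI finite_imageI) (auto intro: finite_subset[of _ "J \<times> J"])
  have N0: "0 \<notin> N"
  proof -
    have a: "0 \<notin> w ` J" using nz by auto
    have b: "0 \<notin> (\<lambda>(i,j). w i - w j) ` {(i,j). i \<in> J \<and> j \<in> J \<and> i \<noteq> j}"
      using np by auto
    have c: "0 \<notin> (\<lambda>(i,j). w i + w j) ` {(i,j). i \<in> J \<and> j \<in> J \<and> i \<noteq> j}"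
    proof
      assume "0 \<in> (\<lambda>(i,j). w i + w j) ` {(i,j). i \<in> J \<and> j \<in> J \<and> i \<noteq> j}"
      then obtain i j where "i \<in> J" "j \<in> J" "i \<noteq> j" "w i + w j = 0" by auto
      then show False using np eq_neg_iff_add_eq_0 by metis
    qed
    show ?thesis using a b c unfolding N_def by blast
  qed
  have good: "\<forall>j\<in>J. al j = 0 \<and> be j \<bullet> z = 0" if zg: "\<forall>n\<in>N. n \<bullet> z \<noteq> 0" for z
  proof -
    have c0: "w j \<bullet> z \<noteq> 0" if "j \<in> J" for j using zg that unfolding N_def by auto
    have inj: "inj_on (\<lambda>j. \<bar>w j \<bullet> z\<bar>) J"
    proof (rule inj_onI)
      fix i j assume ij: "i \<in> J" "j \<in> J" "\<bar>w i \<bullet> z\<bar> = \<bar>w j \<bullet> z\<bar>"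
      show "i = j"
      proof (rule ccontr)
        assume "i \<noteq> j"
        then have m: "(i,j) \<in> {(i,j). i \<in> J \<and> j \<in> J \<and> i \<noteq> j}" using ij by simp
        have "w i - w j \<in> N" unfolding N_def using imageI[OF m, of "\<lambda>(i,j). w i - w j"] by simp
        moreover have "w i + w j \<in> N" unfolding N_def using imageI[OF m, of "\<lambda>(i,j). w i + w j"] by simp
        ultimately have "(w i - w j) \<bullet> z \<noteq> 0" "(w i + w j) \<bullet> z \<noteq> 0"
          using zg by auto
        then show False using ij(3) by (auto simp: inner_diff_left inner_add_left abs_if split: if_splits)
      qed
    qed
    have "\<forall>g\<in>J. sgn (w g \<bullet> z) * al g = 0 \<and> be g \<bullet> z = 0"
    proof (rule indep_1d[OF fin inj])
      show "\<forall>g\<in>J. 0 < \<bar>w g \<bullet> z\<bar>" using c0 by auto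
      show "\<forall>t. (\<Sum>g\<in>J. sgn (w g \<bullet> z) * al g * tanh (\<bar>w g \<bullet> z\<bar> * t) +
          (be g \<bullet> z) * (t * (1 - (tanh (\<bar>w g \<bullet> z\<bar> * t))\<^sup>2))) = 0"
      proof
        fix t
        have "(\<Sum>g\<in>J. sgn (w g \<bullet> z) * al g * tanh (\<bar>w g \<bullet> z\<bar> * t) +
          (be g \<bullet> z) * (t * (1 - (tanh (\<bar>w g \<bullet> z\<bar> * t))\<^sup>2))) =
          (\<Sum>j\<in>J. al j * tanh (w j \<bullet> (t *\<^sub>R z)) + (be j \<bullet> (t *\<^sub>R z)) * (1 - tanh (w j \<bullet> (t *\<^sub>R z))^2))"
        proof (intro sum.cong refl)
          fix g assume "g \<in> J"
          have e1: "w g \<bullet> (t *\<^sub>R z) = t * (w g \<bullet> z)" "be g \<bullet> (t *\<^sub>R z) = t * (be g \<bullet> z)"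
            by (simp_all add: inner_scaleR_right)
          show "sgn (w g \<bullet> z) * al g * tanh (\<bar>w g \<bullet> z\<bar> * t) +
            (be g \<bullet> z) * (t * (1 - (tanh (\<bar>w g \<bullet> z\<bar> * t))\<^sup>2)) =
            al g * tanh (w g \<bullet> (t *\<^sub>R z)) + (be g \<bullet> (t *\<^sub>R z)) * (1 - tanh (w g \<bullet> (t *\<^sub>R z))^2)"
            unfolding e1 tanh_sq_abs_mult'[of t "w g \<bullet> z"] unfolding tanh_abs_mult'[of t "w g \<bullet> z"]
            by (simp only: mult_ac)
        qed
        also have "\<dots> = 0" using eq by blast
        finally show "(\<Sum>g\<in>J. sgn (w g \<bullet> z) * al g * tanh (\<bar>w g \<bullet> z\<bar> * t) +
          (be g \<bullet> z) * (t * (1 - (tanh (\<bar>w g \<bullet> z\<bar> * t))\<^sup>2))) = 0" .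
      qed
    qed
    then show ?thesis using c0 by (auto simp: sgn_zero_iff)
  qed
  obtain z0 where z0: "\<forall>n\<in>N. n \<bullet> z0 \<noteq> 0" using avoid_hyperplanes[OF finN N0] by blast
  have "be j \<bullet> y = 0" if j: "j \<in> J" for j y
  proof -
    define B where "B = {s::real. \<exists>n\<in>N. inner n (z0 + s *\<^sub>R y) = 0}"
    have "finite B" unfolding B_def using finN z0 by (intro line_finite) auto
    then obtain s1 where s1: "s1 \<notin> B" using ex_new_if_finite[OF infinite_UNIV_char_0] by blast
    from \<open>finite B\<close> obtain s2 where s2: "s2 \<notin> insert s1 B"
      using ex_new_if_finite[OF infinite_UNIV_char_0, of "insert s1 B"] by blast
    have "be j \<bullet> (z0 + s1 *\<^sub>R y) = 0" using good[of "z0 + s1 *\<^sub>R y"] s1 j unfolding B_def by auto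
    moreover have "be j \<bullet> (z0 + s2 *\<^sub>R y) = 0" using good[of "z0 + s2 *\<^sub>R y"] s2 j unfolding B_def by auto
    ultimately have e: "be j \<bullet> z0 + s1 * (be j \<bullet> y) = 0" "be j \<bullet> z0 + s2 * (be j \<bullet> y) = 0"
      by (simp_all add: inner_add_right)
    have "(s1 - s2) * (be j \<bullet> y) = (be j \<bullet> z0 + s1 * (be j \<bullet> y)) - (be j \<bullet> z0 + s2 * (be j \<bullet> y))"
      by (simp add: algebra_simps)
    then have "(s1 - s2) * (be j \<bullet> y) = 0" using e by simp
    then show ?thesis using s2 by auto
  qed
  then show ?thesis using good[OF z0] by (metis inner_eq_zero_iff)
qed

lemma group_rep:
  fixes A :: "'i \<Rightarrow> real" and w :: "'i \<Rightarrow> real^'d"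
  assumes "finite S"
  shows "\<exists>J c. J \<subseteq> S \<and> (\<forall>j\<in>J. A j \<noteq> 0 \<and> w j \<noteq> 0) \<and>
    (\<forall>i\<in>J. \<forall>j\<in>J. i \<noteq> j \<longrightarrow> w i \<noteq> w j \<and> w i \<noteq> - w j) \<and>
    (\<forall>x. (\<Sum>i\<in>S. A i * tanh (w i \<bullet> x)) = (\<Sum>j\<in>J. c j * tanh (w j \<bullet> x)))"
  using assms
proof (induction S rule: finite_induct)
  case empty then show ?case by (intro exI[of _ "{}"]) auto
next
  case (insert i S)
  then obtain J c where J: "J \<subseteq> S" "\<forall>j\<in>J. A j \<noteq> 0 \<and> w j \<noteq> 0"
    "\<forall>i\<in>J. \<forall>j\<in>J. i \<noteq> j \<longrightarrow> w i \<noteq> w j \<and> w i \<noteq> - w j"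
    "\<forall>x. (\<Sum>i\<in>S. A i * tanh (w i \<bullet> x)) = (\<Sum>j\<in>J. c j * tanh (w j \<bullet> x))" by blast
  have finJ: "finite J" using J(1) insert.hyps(1) finite_subset by blast
  have iJ: "i \<notin> J" using J(1) insert.hyps(2) by auto
  have split: "(\<Sum>l\<in>insert i S. A l * tanh (w l \<bullet> x)) = A i * tanh (w i \<bullet> x) + (\<Sum>j\<in>J. c j * tanh (w j \<bullet> x))" for x
    using insert.hyps J(4) by simp
  show ?case
  proof (cases "A i = 0 \<or> w i = 0")
    case True
    then show ?thesis using J split by (intro exI[of _ J] exI[of _ c]) auto
  next
    case False
    show ?thesis
    proof (cases "\<exists>j\<in>J. w j = w i")
      case True
      then obtain j where j: "j \<in> J" "w j = w i" by blast
      define c' where "c' = (\<lambda>l. c l + (if l = j then A i else 0))"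
      have "(\<Sum>l\<in>J. c' l * tanh (w l \<bullet> x)) = (\<Sum>l\<in>J. c l * tanh (w l \<bullet> x)) + A i * tanh (w i \<bullet> x)" for x
      proof -
        have "c' l * tanh (w l \<bullet> x) = c l * tanh (w l \<bullet> x) + (if l = j then A i * tanh (w i \<bullet> x) else 0)" for l
          using j by (auto simp: c'_def algebra_simps)
        then show ?thesis using j finJ by (simp add: sum.distrib)
      qed
      then show ?thesis using J split by (intro exI[of _ J] exI[of _ c']) auto
    next
      case nT: False
      show ?thesis
      proof (cases "\<exists>j\<in>J. w j = - w i")
        case True
        then obtain j where j: "j \<in> J" "w j = - w i" by blast
        define c' where "c' = (\<lambda>l. c l + (if l = j then - A i else 0))"
        have "(\<Sum>l\<in>J. c' l * tanh (w l \<bullet> x)) = (\<Sum>l\<in>J. c l * tanh (w l \<bullet> x)) + A i * tanh (w i \<bullet> x)" for x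
        proof -
          have "c' l * tanh (w l \<bullet> x) = c l * tanh (w l \<bullet> x) + (if l = j then A i * tanh (w i \<bullet> x) else 0)" for l
            using j by (auto simp: c'_def algebra_simps)
          then show ?thesis using j finJ by (simp add: sum.distrib)
        qed
        then show ?thesis using J split by (intro exI[of _ J] exI[of _ c']) auto
      next
        case nF: False
        define c' where "c' = c(i := A i)"
        have "(\<Sum>l\<in>insert i J. c' l * tanh (w l \<bullet> x)) = A i * tanh (w i \<bullet> x) + (\<Sum>l\<in>J. c l * tanh (w l \<bullet> x))" for x
          unfolding c'_def using iJ finJ by (simp add: sum.insert)
            (intro sum.cong refl, auto)
        moreover have "\<forall>a\<in>insert i J. \<forall>b\<in>insert i J. a \<noteq> b \<longrightarrow> w a \<noteq> w b \<and> w a \<noteq> - w b"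
          using J(3) nT nF by (auto simp: minus_equation_iff)
        ultimately show ?thesis using J split False by (intro exI[of _ "insert i J"] exI[of _ c']) auto
      qed
    qed
  qed
qed

definition gr :: "(real \<times> (real^'d))^'m::finite \<Rightarrow> real^'d \<Rightarrow> (real \<times> (real^'d))^'m" where
  "gr th x = (\<chi> i. (tanh (snd (th$i) \<bullet> x), (fst (th$i) * (1 - tanh (snd (th$i) \<bullet> x)^2)) *\<^sub>R x))"

lemma dnn_gr: "dnn th x a = a \<bullet> gr th x"
proof -
  have "a \<bullet> gr th x = (\<Sum>i\<in>UNIV. a$i \<bullet> gr th x $ i)" by (rule inner_vec_def)
  then show ?thesis unfolding dnn_def
    by (simp add: gr_def inner_prod_def inner_scaleR_right algebra_simps)
qed

lemma tangent_eq: "tangent_hyperplane th = {u. \<exists>a. u = (\<lambda>x. nn_model th x + a \<bullet> gr th x)}"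
  unfolding tangent_hyperplane_def frechet_nn dnn_gr ..

definition BJ :: "'m set \<Rightarrow> ((real \<times> (real^'d))^'m::finite) set" where
  "BJ J = (\<lambda>(i,b). axis i b) ` (J \<times> Basis)"

lemma BJ_basis: "BJ J \<subseteq> Basis"
  unfolding BJ_def Basis_vec_def by auto

lemma BJ_indep: "independent (BJ J)"
  using independent_Basis BJ_basis independent_mono by blast

lemma BJ_card: "card (BJ J :: ((real \<times> (real^'d))^'m::finite) set) = card J * (1 + CARD('d))"
proof -
  have "inj_on (\<lambda>(i,b). axis i b :: (real \<times> (real^'d))^'m) (J \<times> Basis)"
    by (auto simp: inj_on_def axis_eq_axis nonzero_Basis)
  then have "card (BJ J :: ((real \<times> (real^'d))^'m::finite) set) = card (J \<times> (Basis :: (real \<times> (real^'d)) set))"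
    unfolding BJ_def by (rule card_image)
  also have "\<dots> = card J * (1 + CARD('d))"
    by (simp add: card_cartesian_product DIM_prod)
  finally show ?thesis .
qed

lemma BJ_span_zero:
  fixes p :: "(real \<times> (real^'d))^'m::finite" and J :: "'m set"
  assumes "p \<in> span (BJ J)" "i \<notin> J"
  shows "p $ i = 0"
proof -
  have "span (BJ J :: ((real \<times> (real^'d))^'m) set) \<subseteq> {p. \<forall>i. i \<notin> J \<longrightarrow> p $ i = 0}"
  proof (rule span_minimal)
    show "(BJ J :: ((real \<times> (real^'d))^'m) set) \<subseteq> {p. \<forall>i. i \<notin> J \<longrightarrow> p $ i = 0}"
      unfolding BJ_def by (auto simp: axis_def)
    show "subspace {p :: (real \<times> (real^'d))^'m. \<forall>i. i \<notin> J \<longrightarrow> p $ i = 0}"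
      by (auto simp: subspace_def)
  qed
  then show ?thesis using assms by auto
qed

lemma BJ_span_in:
  fixes p :: "(real \<times> (real^'d))^'m::finite" and J :: "'m set"
  assumes "\<forall>i. i \<notin> J \<longrightarrow> p $ i = 0"
  shows "p \<in> span (BJ J)"
proof -
  have "(\<Sum>b\<in>Basis. (p \<bullet> b) *\<^sub>R b) \<in> span (BJ J)"
  proof (rule span_sum)
    fix b :: "(real \<times> (real^'d))^'m" assume b: "b \<in> Basis"
    then obtain i u where iu: "b = axis i u" "u \<in> Basis" unfolding Basis_vec_def by auto
    show "(p \<bullet> b) *\<^sub>R b \<in> span (BJ J)"
    proof (cases "i \<in> J")
      case True
      then have "b \<in> BJ J" using iu unfolding BJ_def by auto
      then show ?thesis by (intro span_scale span_base)
    next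
      case False
      then have "p \<bullet> b = 0" using assms iu by (simp add: inner_axis)
      then show ?thesis by (simp add: span_zero)
    qed
  qed
  then show ?thesis by (simp add: euclidean_representation)
qed

lemma kernel_exists:
  fixes B :: "'a::euclidean_space set" and g :: "nat \<Rightarrow> 'a"
  assumes ind: "independent B" and cB: "card B > n"
  shows "\<exists>a\<in>span B. a \<noteq> 0 \<and> (\<forall>i<n. a \<bullet> g i = 0)"
proof (rule ccontr)
  assume H: "\<not> ?thesis"
  define E where "E = (\<lambda>a. \<Sum>i<n. (a \<bullet> g i) *\<^sub>R g i)"
  have linE: "linear E"
    unfolding E_def
    by (rule linearI) (simp_all add: inner_add_left scaleR_add_left sum.distrib scaleR_sum_right)
  have Ez: "a = 0" if "a \<in> span B" "E a = 0" for a
  proof -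
    have "a \<bullet> E a = (\<Sum>i<n. (a \<bullet> g i)^2)"
      unfolding E_def by (simp add: inner_sum_right power2_eq_square)
    then have "(\<Sum>i<n. (a \<bullet> g i)^2) = 0" using that by simp
    then have "\<forall>i<n. a \<bullet> g i = 0" by (simp add: sum_nonneg_eq_0_iff)
    then show "a = 0" using H that by blast
  qed
  have inj: "inj_on E (span B)"
  proof (rule inj_onI)
    fix x y assume xy: "x \<in> span B" "y \<in> span B" "E x = E y"
    then have "E (x - y) = 0" using linE by (simp add: linear_diff)
    then have "x - y = 0" using Ez span_diff xy by blast
    then show "x = y" by simp
  qed
  have indE: "independent (E ` B)" using linear_independent_injective_image[OF linE ind inj] .
  have "card (E ` B) = card B"
    using inj_on_subset[OF inj span_superset] by (rule card_image)
  moreover have "E ` B \<subseteq> span (g ` {..<n})"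
  proof
    fix v assume "v \<in> E ` B"
    then obtain b where v: "v = E b" by auto
    show "v \<in> span (g ` {..<n})" unfolding v E_def
    proof (rule span_sum)
      fix i assume "i \<in> {..<n}"
      then show "(b \<bullet> g i) *\<^sub>R g i \<in> span (g ` {..<n})" by (intro span_scale span_base) auto
    qed
  qed
  then have "card (E ` B) \<le> dim (span (g ` {..<n}))" using indE by (rule independent_card_le_dim)
  moreover have "dim (span (g ` {..<n})) \<le> card (g ` {..<n})" by (rule dim_le_card) auto
  moreover have "card (g ` {..<n}) \<le> n" using card_image_le[of "{..<n}" g] by simp
  ultimately show False using cB by linarith
qed

lemma points_exist:
  fixes g :: "'x \<Rightarrow> 'a::euclidean_space"
  assumes "range g \<subseteq> span Bz" "finite Bz" "card Bz \<le> N"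
  shows "\<exists>xs. length xs = N \<and> (\<forall>a. (\<forall>i<N. a \<bullet> g (xs!i) = 0) \<longrightarrow> (\<forall>x. a \<bullet> g x = 0))"
proof -
  obtain B where B: "B \<subseteq> range g" "independent B" "range g \<subseteq> span B"
    by (rule maximal_independent_subset)
  have "card B \<le> dim (span Bz)" using B(1,2) assms(1) by (intro independent_card_le_dim) auto
  also have "\<dots> \<le> card Bz" using assms(2) by (intro dim_le_card) auto
  finally have cB: "card B \<le> N" using assms(3) by simp
  have finB: "finite B" using B(2) by (rule independent_imp_finite)
  obtain l where l: "set l = B" "distinct l" using finite_distinct_list[OF finB] by blast
  have ll: "length l = card B" using l distinct_card by fastforce
  define xs where "xs = map (\<lambda>b. SOME x. g x = b) l @ replicate (N - length l) undefined"
  have lxs: "length xs = N" unfolding xs_def using ll cB by simp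
  show ?thesis
  proof (intro exI conjI allI impI)
    show "length xs = N" by (rule lxs)
    fix a x assume H: "\<forall>i<N. a \<bullet> g (xs ! i) = 0"
    have "a \<bullet> b = 0" if "b \<in> B" for b
    proof -
      have "b \<in> set l" using that l(1) by simp
      then obtain j where j: "j < length l" "l ! j = b" by (auto simp: in_set_conv_nth)
      have xj: "xs ! j = (SOME x. g x = b)" unfolding xs_def using j by (simp add: nth_append)
      have "\<exists>x. g x = b" using that B(1) by auto
      then have "g (SOME x. g x = b) = b" by (rule someI_ex)
      then have "g (xs ! j) = b" using xj by simp
      moreover have "j < N" using j ll cB by simp
      ultimately show ?thesis using H by metis
    qed
    moreover have "g x \<in> span B" using B(3) by auto
    ultimately have "orthogonal a (g x)"
      by (intro orthogonal_to_span[of "g x" B a]) (auto simp: orthogonal_def)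
    then show "a \<bullet> g x = 0" by (simp add: orthogonal_def)
  qed
qed

lemma NN_rep:
  assumes "fs \<in> NN_class (int k)"
  shows "\<exists>(a::nat \<Rightarrow> real) (w::nat \<Rightarrow> real^'d). fs = (\<lambda>x. \<Sum>i<k. a i * tanh (w i \<bullet> x))"
proof (cases "k = 0")
  case True then show ?thesis using assms by (simp add: NN_class_def)
next
  case False then show ?thesis using assms by (simp add: NN_class_def)
qed

lemma NN_pad:
  fixes v :: "'i \<Rightarrow> real^'d"
  assumes "k \<ge> 1" "finite J" "card J < k" "fs = (\<lambda>x. \<Sum>j\<in>J. c j * tanh (v j \<bullet> x))"
  shows "fs \<in> NN_class (int k - 1)"
proof (cases "k = 1")
  case True
  then have "J = {}" using assms by auto
  then show ?thesis using assms True by (simp add: NN_class_def)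
next
  case False
  then have k2: "k \<ge> 2" using assms by simp
  obtain h where h: "bij_betw h {0..<card J} J" using ex_bij_betw_nat_finite[OF assms(2)] by blast
  define a where "a = (\<lambda>i. if i < card J then c (h i) else 0)"
  define w where "w = (\<lambda>i. v (h i))"
  have "(\<lambda>x. \<Sum>i<k-1. a i * tanh (w i \<bullet> x)) = fs"
  proof
    fix x
    have "(\<Sum>i<k-1. a i * tanh (w i \<bullet> x)) = (\<Sum>i\<in>{0..<card J}. a i * tanh (w i \<bullet> x))"
      using assms(3) by (intro sum.mono_neutral_right) (auto simp: a_def)
    also have "\<dots> = (\<Sum>i\<in>{0..<card J}. c (h i) * tanh (v (h i) \<bullet> x))"
      by (intro sum.cong refl) (simp add: a_def w_def)
    also have "\<dots> = (\<Sum>j\<in>J. c j * tanh (v j \<bullet> x))"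
      using sum.reindex_bij_betw[OF h, of "\<lambda>j. c j * tanh (v j \<bullet> x)"] by simp
    finally show "(\<Sum>i<k-1. a i * tanh (w i \<bullet> x)) = fs x" using assms(4) by simp
  qed
  moreover have "nat (int k - 1) = k - 1" by simp
  ultimately show ?thesis using k2 unfolding NN_class_def by auto
qed

lemma emp_nonneg: "admissible_loss loss \<Longrightarrow> emp_loss loss fs xs u \<ge> 0"
  unfolding emp_loss_def admissible_loss_def by (auto intro!: divide_nonneg_nonneg sum_nonneg)

lemma emp_zero_iff:
  assumes "admissible_loss loss"
  shows "emp_loss loss fs xs u = 0 \<longleftrightarrow> (\<forall>i<length xs. u (xs!i) = fs (xs!i))"
proof (cases "xs = []")
  case True then show ?thesis by (simp add: emp_loss_def)
next
  case False
  have nn: "\<forall>z. loss z \<ge> 0" and z: "\<forall>u v. loss (u, v) = 0 \<longleftrightarrow> u = v"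
    using assms unfolding admissible_loss_def by auto
  have "emp_loss loss fs xs u = 0 \<longleftrightarrow> (\<Sum>i<length xs. loss (u (xs ! i), fs (xs ! i))) = 0"
    using False by (simp add: emp_loss_def)
  also have "\<dots> \<longleftrightarrow> (\<forall>i<length xs. loss (u (xs ! i), fs (xs ! i)) = 0)"
    using nn by (subst sum_nonneg_eq_0_iff) auto
  also have "\<dots> \<longleftrightarrow> (\<forall>i<length xs. u (xs!i) = fs (xs!i))" using z by simp
  finally show ?thesis .
qed

lemma min_char:
  assumes "admissible_loss loss" "fs \<in> S"
  shows "minimizers_on (emp_loss loss fs xs) S = {u\<in>S. \<forall>i<length xs. u (xs!i) = fs (xs!i)}"
proof -
  have f0: "emp_loss loss fs xs fs = 0" using emp_zero_iff[OF assms(1), of fs xs fs] by simp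
  show ?thesis
  proof (intro equalityI subsetI)
    fix u assume "u \<in> minimizers_on (emp_loss loss fs xs) S"
    then have "u \<in> S" "emp_loss loss fs xs u \<le> 0" using assms(2) f0 unfolding minimizers_on_def by force+
    then show "u \<in> {u\<in>S. \<forall>i<length xs. u (xs!i) = fs (xs!i)}"
      using emp_nonneg[OF assms(1), of fs xs u] emp_zero_iff[OF assms(1)] by auto
  next
    fix u assume u: "u \<in> {u\<in>S. \<forall>i<length xs. u (xs!i) = fs (xs!i)}"
    then have "emp_loss loss fs xs u = 0" using emp_zero_iff[OF assms(1), of fs xs u] by simp
    then show "u \<in> minimizers_on (emp_loss loss fs xs) S"
      using u emp_nonneg[OF assms(1), of fs xs] unfolding minimizers_on_def by auto
  qed
qed

theorem mainTheorem17:
  fixes loss :: "real \<times> real \<Rightarrow> real" and fs :: "real^'d \<Rightarrow> real" and k :: nat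
  assumes "admissible_loss loss"
    and "k \<le> CARD('m::finite)"
    and "fs \<in> NN_class (int k) - NN_class (int k - 1)"
  shows "LLR_guarantee TYPE('m) loss fs (k * (CARD('d) + 1))
    \<and> optimistic_sample_size TYPE('m) loss fs = k * (CARD('d) + 1)"
proof -
  note adm = assms(1) and km = assms(2) and fsin = assms(3)
  define N where "N = k * (CARD('d) + 1)"
  have upper: "LLR_guarantee TYPE('m) loss fs N"
  proof -
    obtain a and w :: "nat \<Rightarrow> real^'d" where fsd: "fs = (\<lambda>x. \<Sum>i<k. a i * tanh (w i \<bullet> x))"
      using NN_rep fsin by blast
    obtain e :: "nat \<Rightarrow> 'm" where e: "inj_on e {..<k}"
      using card_le_inj[of "{..<k}" "UNIV::'m set"] km by auto
    define J where "J = e ` {..<k}"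
    have cJ: "card J = k" using card_image[OF e] J_def by simp
    define th :: "(real \<times> (real^'d))^'m" where
      "th = (\<chi> j. if j \<in> J then (a (inv_into {..<k} e j), w (inv_into {..<k} e j)) else (0,0))"
    have nn: "nn_model th = fs"
    proof
      fix x
      have "nn_model th x = (\<Sum>j\<in>J. fst (th$j) * tanh (snd (th$j) \<bullet> x))"
        unfolding nn_model_def by (rule sum.mono_neutral_right) (auto simp: th_def)
      also have "\<dots> = (\<Sum>i<k. fst (th$(e i)) * tanh (snd (th$(e i)) \<bullet> x))"
        unfolding J_def using sum.reindex[OF e, of "\<lambda>j. fst (th$j) * tanh (snd (th$j) \<bullet> x)"]
        by (simp add: comp_def)
      also have "\<dots> = fs x" unfolding fsd th_def J_def using e
        by (intro sum.cong refl) (auto simp: inv_into_f_f)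
      finally show "nn_model th x = fs x" .
    qed
    have rg: "range (gr th) \<subseteq> span (BJ J)"
    proof
      fix v assume "v \<in> range (gr th)"
      then obtain x where v: "v = gr th x" by auto
      have "\<forall>i. i \<notin> J \<longrightarrow> gr th x $ i = 0" by (simp add: gr_def th_def zero_prod_def)
      then show "v \<in> span (BJ J)" using v BJ_span_in by blast
    qed
    have "card (BJ J :: ((real \<times> (real^'d))^'m) set) = card J * (1 + CARD('d))" by (rule BJ_card)
    then have cB: "card (BJ J :: ((real \<times> (real^'d))^'m) set) \<le> N" using cJ N_def by simp
    obtain xs where xs: "length xs = N" "\<forall>a. (\<forall>i<N. a \<bullet> gr th (xs!i) = 0) \<longrightarrow> (\<forall>x. a \<bullet> gr th x = 0)"
      using points_exist[OF rg _ cB] finite_subset[OF BJ_basis finite_Basis] by blast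
    have tan: "tangent_hyperplane th = {u. \<exists>a. u = (\<lambda>x. fs x + a \<bullet> gr th x)}"
      using tangent_eq[of th] nn by simp
    have fsT: "fs \<in> tangent_hyperplane th" unfolding tan by (intro CollectI exI[of _ 0]) simp
    have "minimizers_on (emp_loss loss fs xs) (tangent_hyperplane th) = {fs}"
      unfolding min_char[OF adm fsT]
    proof (intro equalityI subsetI)
      fix u assume "u \<in> {u \<in> tangent_hyperplane th. \<forall>i<length xs. u (xs!i) = fs (xs!i)}"
      then obtain b where u: "u = (\<lambda>x. fs x + b \<bullet> gr th x)" and c: "\<forall>i<N. u (xs!i) = fs (xs!i)"
        unfolding tan using xs(1) by auto
      then have "\<forall>i<N. b \<bullet> gr th (xs!i) = 0" by simp
      then have "\<forall>x. b \<bullet> gr th x = 0" using xs(2) by blast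
      then show "u \<in> {fs}" using u by auto
    next
      fix u assume "u \<in> {fs}"
      then show "u \<in> {u \<in> tangent_hyperplane th. \<forall>i<length xs. u (xs!i) = fs (xs!i)}" using fsT by simp
    qed
    then show ?thesis unfolding LLR_guarantee_def target_set_def using xs(1) nn by blast
  qed
  have lower: "\<not> LLR_guarantee TYPE('m) loss fs n" if nN: "n < N" for n
  proof
    assume "LLR_guarantee TYPE('m) loss fs n"
    then obtain xs and th :: "(real \<times> (real^'d))^'m" where xs: "length xs = n" "nn_model th = fs"
      "minimizers_on (emp_loss loss fs xs) (tangent_hyperplane th) = {fs}"
      unfolding LLR_guarantee_def target_set_def by blast
    have k1: "k \<ge> 1" using nN N_def by (cases k) auto
    obtain J c where J: "\<forall>j\<in>J. fst (th$j) \<noteq> 0 \<and> snd (th$j) \<noteq> 0"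
      "\<forall>i\<in>J. \<forall>j\<in>J. i \<noteq> j \<longrightarrow> snd (th$i) \<noteq> snd (th$j) \<and> snd (th$i) \<noteq> - snd (th$j)"
      "\<forall>x. (\<Sum>i\<in>UNIV. fst (th$i) * tanh (snd (th$i) \<bullet> x)) = (\<Sum>j\<in>J. c j * tanh (snd (th$j) \<bullet> x))"
      using group_rep[of "UNIV::'m set" "\<lambda>i. fst (th$i)" "\<lambda>i. snd (th$i)"] by auto
    have fsJ: "fs = (\<lambda>x. \<Sum>j\<in>J. c j * tanh (snd (th$j) \<bullet> x))"
      using J(3) xs(2) unfolding nn_model_def by auto
    have cJ: "card J \<ge> k"
    proof (rule ccontr)
      assume "\<not> k \<le> card J"
      then have "fs \<in> NN_class (int k - 1)" using NN_pad[OF k1 _ _ fsJ] by auto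
      then show False using fsin by auto
    qed
    have "k * (CARD('d) + 1) \<le> card J * (1 + CARD('d))" using cJ by (metis add.commute mult_le_mono1)
    moreover have "card (BJ J :: ((real \<times> (real^'d))^'m) set) = card J * (1 + CARD('d))" by (rule BJ_card)
    ultimately have "card (BJ J :: ((real \<times> (real^'d))^'m) set) > n" using nN N_def by simp
    then obtain a where a: "a \<in> span (BJ J)" "a \<noteq> 0" "\<forall>i<n. a \<bullet> gr th (xs!i) = 0"
      using kernel_exists[OF BJ_indep, where n=n and g="\<lambda>i. gr th (xs!i)"] by blast
    define u where "u = (\<lambda>x. fs x + a \<bullet> gr th x)"
    have tan: "tangent_hyperplane th = {u. \<exists>a. u = (\<lambda>x. fs x + a \<bullet> gr th x)}"
      using tangent_eq[of th] xs(2) by simp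
    have fsT: "fs \<in> tangent_hyperplane th" unfolding tan by (intro CollectI exI[of _ 0]) simp
    have uT: "u \<in> tangent_hyperplane th" unfolding tan u_def by blast
    have "u \<in> minimizers_on (emp_loss loss fs xs) (tangent_hyperplane th)"
      unfolding min_char[OF adm fsT] using uT a(3) xs(1) by (simp add: u_def)
    then have "u = fs" using xs(3) by auto
    then have z: "a \<bullet> gr th x = 0" for x using fun_cong[OF \<open>u = fs\<close>, of x] unfolding u_def by simp
    have out: "a $ i = 0" if "i \<notin> J" for i using BJ_span_zero[OF a(1) that] .
    have "\<forall>x. (\<Sum>j\<in>J. fst (a$j) * tanh (snd (th$j) \<bullet> x)
        + ((fst (th$j) *\<^sub>R snd (a$j)) \<bullet> x) * (1 - tanh (snd (th$j) \<bullet> x)^2)) = 0"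
    proof
      fix x
      have "0 = dnn th x a" using z[of x] by (simp add: dnn_gr)
      also have "\<dots> = (\<Sum>j\<in>J. fst (a$j) * tanh (snd (th$j) \<bullet> x)
        + fst (th$j) * ((snd (a$j) \<bullet> x) * (1 - tanh (snd (th$j) \<bullet> x)^2)))"
        unfolding dnn_def by (rule sum.mono_neutral_right) (auto simp: out)
      also have "\<dots> = (\<Sum>j\<in>J. fst (a$j) * tanh (snd (th$j) \<bullet> x)
        + ((fst (th$j) *\<^sub>R snd (a$j)) \<bullet> x) * (1 - tanh (snd (th$j) \<bullet> x)^2))"
        by (intro sum.cong refl) (simp add: inner_scaleR_left)
      finally show "(\<Sum>j\<in>J. fst (a$j) * tanh (snd (th$j) \<bullet> x)
        + ((fst (th$j) *\<^sub>R snd (a$j)) \<bullet> x) * (1 - tanh (snd (th$j) \<bullet> x)^2)) = 0" by simp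
    qed
    from indep_multi[OF _ _ J(2) this] J(1)
    have ind: "\<forall>j\<in>J. fst (a$j) = 0 \<and> fst (th$j) *\<^sub>R snd (a$j) = 0" by auto
    have "a $ j = 0" for j
    proof (cases "j \<in> J")
      case True
      then show ?thesis using ind J(1) by (auto simp: prod_eq_iff)
    next
      case False then show ?thesis by (rule out)
    qed
    then have "a = 0" by (simp add: vec_eq_iff)
    with a(2) show False ..
  qed
  have "optimistic_sample_size TYPE('m) loss fs = N"
    unfolding optimistic_sample_size_def
    by (rule Least_equality[where P="LLR_guarantee TYPE('m) loss fs", OF upper]) (meson lower not_less)
  then show ?thesis using upper N_def by simp
qed

end
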